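(* For all planar forests $F,G$: $F\leq G$ if and only if $m(G)\leq m(F)$.
   Context: Planar rooted trees have their children linearly ordered left to right; $\mathbf{F}$ is the set of planar forests (finite, possibly empty, sequences $t_1\cdots t_n$ of planar rooted trees; $1$ = empty forest; product = concatenation). $B^+(F)$ is the tree obtained by grafting the trees of $F$ on a new common root. $m:\mathbf{F}\to\mathbf{F}$ is the map defined recursively by $m(1)=1$ and $m(B^+(F_1)F_2)=B^+(m(F_2))m(F_1)$. Order on $\mathbf{F}$: an admissible transformation of a forest: choose a vertex $s$ which is the leftmost child of its parent $u$; if $u$ is not a root, with parent $r$, move the subtree rooted at $s$ to become a child of $r$ immediately to the left of $u$; if $u$ is a root, move the subtree rooted at $s$ to become a new tree of the forest immediately to the left of the tree of $u$; everything else unchanged. $F\leq G$ iff $G$ is obtained from $F$ by a finite (possibly empty) sequence of admissible transformations. *)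

theory Defs
  imports Main
begin

text \<open>A planar forest is a list of planar trees; the empty list is the empty forest 1,
  and the product of forests is list concatenation.\<close>
datatype ptree = Node "ptree list"

type_synonym pforest = "ptree list"

definition Bplus :: "pforest \<Rightarrow> ptree" where
  "Bplus F = Node F"

fun m :: "pforest \<Rightarrow> pforest" where
  "m [] = []"
| "m (Node F1 # F2) = Bplus (m F2) # m F1"

text \<open>The basic move acts on the ordered list of
  children of a vertex r (or on the list of roots of the forest): a vertex u in
  that list whose leftmost child is s gets the subtree rooted at s detached and
  inserted immediately to the left of u.\<close>
inductive adm_step :: "pforest \<Rightarrow> pforest \<Rightarrow> bool" where
  move: "adm_step (L1 @ Node (s # C) # L2) (L1 @ s # Node C # L2)"
| inside: "adm_step A B \<Longrightarrow> adm_step (L1 @ Node A # L2) (L1 @ Node B # L2)"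

definition forest_le :: "pforest \<Rightarrow> pforest \<Rightarrow> bool" where
  "forest_le F G \<longleftrightarrow> adm_step\<^sup>*\<^sup>* F G"

end

theory Submission
  imports Defs
begin

inductive step2 :: "pforest \<Rightarrow> pforest \<Rightarrow> bool" where
  rot: "step2 (Node (Node S # C) # L2) (Node S # Node C # L2)"
| lft: "step2 A B \<Longrightarrow> step2 (Node A # L) (Node B # L)"
| rgt: "step2 A B \<Longrightarrow> step2 (x # A) (x # B)"

lemma step2_app: "step2 A B \<Longrightarrow> step2 (L1 @ A) (L1 @ B)"
  by (induction L1) (auto intro: step2.rgt)

lemma adm_step2: "adm_step F G \<Longrightarrow> step2 F G"
proof (induction rule: adm_step.induct)
  case (move L1 s C L2)
  obtain S where "s = Node S" by (cases s)
  then show ?case using step2_app[OF step2.rot] by simp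
next
  case (inside A B L1 L2)
  then show ?case using step2_app[OF step2.lft] by simp
qed

lemma adm_cons: "adm_step A B \<Longrightarrow> adm_step (x # A) (x # B)"
proof (induction rule: adm_step.cases)
  case (move L1 s C L2)
  then show ?case using adm_step.move[of "x # L1" s C L2] by simp
next
  case (inside A' B' L1 L2)
  then show ?case using adm_step.inside[of A' B' "x # L1" L2] by simp
qed

lemma step2_adm: "step2 F G \<Longrightarrow> adm_step F G"
proof (induction rule: step2.induct)
  case (rot S C L2)
  then show ?case using adm_step.move[of "[]" "Node S" C L2] by simp
next
  case (lft A B L)
  then show ?case using adm_step.inside[of A B "[]" L] by simp
next
  case (rgt A B x)
  then show ?case using adm_cons by blast
qed

lemma m_m: "m (m F) = F"
  by (induction F rule: m.induct) (auto simp: Bplus_def)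

lemma step2_m: "step2 F G \<Longrightarrow> step2 (m G) (m F)"
proof (induction rule: step2.induct)
  case (rot S C L2)
  then show ?case using step2.rot[of "m L2" "m C" "m S"] by (simp add: Bplus_def)
next
  case (lft A B L)
  then show ?case by (simp add: Bplus_def step2.rgt)
next
  case (rgt A B x)
  then show ?case by (cases x) (simp add: Bplus_def step2.lft)
qed

lemma le_m: "forest_le F G \<Longrightarrow> forest_le (m G) (m F)"
  unfolding forest_le_def
proof (induction rule: rtranclp_induct)
  case base
  then show ?case by simp
next
  case (step y z)
  have "adm_step (m z) (m y)" using step(2) adm_step2 step2_m step2_adm by blast
  then show ?case using step(3) by (meson converse_rtranclp_into_rtranclp)
qed

theorem proposition36:
  fixes F G :: pforest
  shows "forest_le F G \<longleftrightarrow> forest_le (m G) (m F)"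
  using le_m[of F G] le_m[of "m G" "m F"] by (auto simp: m_m)

end
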